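(* Fix $N\ge1$, $L>0$, $\alpha>0$, $\lambda_e>0$, $\epsilon\in(0,1)$, and let $$K_5=\frac{2N}{\alpha}\left[\left(\frac{L}{N}\right)^\alpha+1\right]W_0\!\left(\frac{\alpha}{2}\left[\frac{\ln\frac{1}{1-\epsilon}}{NK_1}\right]^{-\alpha/2}\right),\qquad K_1=\pi\lambda_e\Gamma\!\left(\tfrac{2}{\alpha}+1\right).$$ Consider, as functions of $p>0$, the optimal non-on-off-transmission rates $R_t^*(p)=R_e^*(p)+\frac{1}{\ln2}W_0\!\big(2^{-R_e^*(p)}/K_4(p)\big)$ and $R_s^*(p)=\frac{1}{\ln2}W_0\!\big(2^{-R_e^*(p)}/K_4(p)\big)$, where $K_4(p)=\frac{N[(L/N)^\alpha+1]}{p}$ and $R_e^*(p)=\log_2\!\left[\frac{2p}{\alpha}W_0\!\left(\frac{\alpha}{2}\left[\frac{\ln\frac{1}{1-\epsilon}}{NK_1}\right]^{-\alpha/2}\right)+1\right]$, and the corresponding optimal throughput $\mathbb{U}^*(p)=\frac{R_s^*(p)}{N}\exp\!\left[-K_4(p)\left(2^{R_t^*(p)}-1\right)\right]$. Then as $p\to\infty$: $R_t^*(p)\to\infty$, $$R_s^*(p)\to\frac{1}{\ln 2}W_0\!\left(\frac{1}{K_5}\right),\qquad \mathbb{U}^*(p)\to\frac{1}{N\ln2}W_0\!\left(\frac{1}{K_5}\right)\exp\!\left[-K_5\exp\!\left(W_0\!\left(\frac{1}{K_5}\right)\right)\right].$$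
   Context: These are the optimal wiretap-code rates and resulting secure transmission throughput $\mathbb{U}=\mathcal{P}_cR_s/N$ (with end-to-end connection probability $\mathcal{P}_c=\exp[-N(2^{R_t}-1)((L/N)^\alpha+1)/p]$) of the non-on-off transmission scheme in an $N$-hop linear network of length $L$ with equal hops, subject to end-to-end secrecy outage probability $\epsilon$ against Poisson eavesdroppers of density $\lambda_e$; $p$ is the transmitter-side SNR, $\alpha$ the path-loss exponent. $W_0$ is the principal branch of the Lambert W function. *)

theory Defs
  imports "HOL-Analysis.Analysis"
begin

definition lambertW0 :: "real \<Rightarrow> real" where
  "lambertW0 x = (THE w. w \<ge> -1 \<and> w * exp w = x)"

end

theory Submission
  imports Defs "HOL-Real_Asymp.Real_Asymp"
begin

lemma mono_pos: assumes "0 \<le> a" "a < b" shows "a * exp a < b * exp (b::real)"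
proof -
  have "a * exp a \<le> a * exp b" using assms by (intro mult_left_mono) auto
  also have "\<dots> < b * exp b" using assms by (intro mult_strict_right_mono) auto
  finally show ?thesis .
qed

lemma W_unique:
  assumes "(w::real) > 0" "w * exp w = y"
  shows "lambertW0 y = w"
  unfolding lambertW0_def
proof (rule the_equality)
  show "w \<ge> -1 \<and> w * exp w = y" using assms by simp
next
  fix v assume v: "v \<ge> -1 \<and> v * exp v = y"
  have "y > 0" using assms by (metis exp_gt_zero mult_pos_pos)
  hence "v > 0" using v by (metis exp_gt_zero mult_nonpos_nonneg not_less less_imp_le)
  show "v = w"
  proof (cases v w rule: linorder_cases)
    case less thus ?thesis using mono_pos[of v w] \<open>v>0\<close> v assms by simp
  next
    case greater thus ?thesis using mono_pos[of w v] v assms by simp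
  qed simp
qed

lemma W_pos: assumes "(y::real) > 0" shows "lambertW0 y > 0 \<and> lambertW0 y * exp (lambertW0 y) = y"
proof -
  have "\<exists>x. 0 \<le> x \<and> x \<le> y \<and> (\<lambda>w. w * exp w) x = y"
    using assms by (intro IVT) (auto intro!: continuous_intros)
  then obtain w where w: "0 \<le> w" "w * exp w = y" by auto
  have "w \<noteq> 0" using w assms by auto
  hence "w > 0" using w by simp
  with W_unique[OF this w(2)] w show ?thesis by simp
qed

lemma W_cont: assumes "(y::real) > 0" shows "isCont lambertW0 y"
proof -
  define x where "x = lambertW0 y"
  have x: "x > 0" "x * exp x = y" using W_pos[OF assms] x_def by auto
  have "isCont lambertW0 ((\<lambda>w. w * exp w) x)"
  proof (rule isCont_inverse_function[where d = "x/2" and f = "\<lambda>w. w * exp w" and x = x])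
    show "0 < x/2" using x by simp
  next
    fix z assume "\<bar>z - x\<bar> \<le> x/2"
    hence "z > 0" using x by arith
    thus "lambertW0 ((\<lambda>w. w * exp w) z) = z" using W_unique[of z "z * exp z"] by simp
  next
    fix z :: real show "isCont (\<lambda>w. w * exp w) z" using isCont_exp[of z] by (intro isCont_mult) auto
  qed
  thus ?thesis using x by simp
qed

theorem corollary4:
  fixes N :: nat and L alpha lam_e eps :: real
  assumes hN: "N \<ge> 1" and hL: "L > 0" and ha: "alpha > 0" and hl: "lam_e > 0"
    and he: "0 < eps" "eps < 1"
  defines "K1 \<equiv> pi * lam_e * Gamma (2 / alpha + 1)"
  defines "Wc \<equiv> lambertW0 ((alpha / 2) * (ln (1 / (1 - eps)) / (real N * K1)) powr (- alpha / 2))"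
  defines "K5 \<equiv> (2 * real N / alpha) * ((L / real N) powr alpha + 1) * Wc"
  defines "K4 \<equiv> (\<lambda>p::real. real N * ((L / real N) powr alpha + 1) / p)"
  defines "Ree \<equiv> (\<lambda>p::real. log 2 ((2 * p / alpha) * Wc + 1))"
  defines "Rss \<equiv> (\<lambda>p::real. lambertW0 (2 powr (- Ree p) / K4 p) / ln 2)"
  defines "Rtt \<equiv> (\<lambda>p::real. Ree p + lambertW0 (2 powr (- Ree p) / K4 p) / ln 2)"
  defines "U \<equiv> (\<lambda>p::real. Rss p / real N * exp (- K4 p * (2 powr (Rtt p) - 1)))"
  shows "filterlim Rtt at_top at_top \<and>
    (Rss \<longlongrightarrow> lambertW0 (1 / K5) / ln 2) at_top \<and>
    (U \<longlongrightarrow> lambertW0 (1 / K5) / (real N * ln 2)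
            * exp (- K5 * exp (lambertW0 (1 / K5)))) at_top"
proof -
  define A where "A = real N * ((L / real N) powr alpha + 1)"
  define c where "c = 2 * Wc / alpha"
  have K1pos: "K1 > 0" proof -
    have "2 / alpha + 1 > 0" using ha by (simp add: add_pos_nonneg)
    hence "Gamma (2 / alpha + 1) > 0" by (rule Gamma_real_pos)
    thus ?thesis unfolding K1_def using hl by simp
  qed
  have lnpos: "ln (1 / (1 - eps)) > 0" using he by simp
  have "(alpha / 2) * (ln (1 / (1 - eps)) / (real N * K1)) powr (- alpha / 2) > 0"
    using ha lnpos K1pos hN by auto
  hence Wcpos: "Wc > 0" unfolding Wc_def using W_pos by blast
  have Apos: "A > 0" unfolding A_def using hN hL by (intro mult_pos_pos add_pos_nonneg) auto
  have cpos: "c > 0" unfolding c_def using Wcpos ha by simp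
  have K5eq: "K5 = A * c" unfolding K5_def A_def c_def by (simp add: field_simps)
  have K5pos: "K5 > 0" using K5eq Apos cpos by simp
  define z where "z = (\<lambda>p::real. p / (A * (c * p + 1)))"
  define w5 where "w5 = lambertW0 (1 / K5)"
  have ev: "eventually (\<lambda>p. p > 0) (at_top :: real filter)" by (rule eventually_gt_at_top)
  have Ree_eq: "2 powr Ree p = c * p + 1" if "p > 0" for p
  proof -
    have "(2 * p / alpha) * Wc + 1 = c * p + 1" unfolding c_def by (simp add: field_simps)
    moreover have "c * p + 1 > 0" using that cpos by (metis add_pos_pos mult_pos_pos zero_less_one)
    ultimately show ?thesis unfolding Ree_def by simp
  qed
  have z_eq: "2 powr (- Ree p) / K4 p = z p" if "p > 0" for p
    using that Ree_eq[OF that] Apos cpos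
    unfolding z_def K4_def A_def[symmetric] by (simp add: powr_minus field_simps)
  have zlim: "(z \<longlongrightarrow> 1 / K5) at_top"
  proof -
    have "(z \<longlongrightarrow> inverse A * inverse c) at_top"
      unfolding z_def using Apos cpos by real_asymp
    thus ?thesis unfolding K5eq by (simp add: field_simps)
  qed
  have Wlim: "((\<lambda>p. lambertW0 (z p)) \<longlongrightarrow> w5) at_top"
    unfolding w5_def using zlim W_cont[of "1/K5"] K5pos
    by (intro isCont_tendsto_compose[where g = lambertW0]) auto
  have tl: "((\<lambda>p. lambertW0 (z p) / ln 2) \<longlongrightarrow> w5 / ln 2) at_top"
      by (intro tendsto_divide Wlim tendsto_const) simp
  have Rss_lim: "(Rss \<longlongrightarrow> w5 / ln 2) at_top"
  proof -
    show ?thesis using tl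
      by (rule tendsto_cong[THEN iffD1, rotated])
         (use ev in \<open>eventually_elim, simp add: Rss_def z_eq\<close>)
  qed
  have Ree_lim: "filterlim Ree at_top at_top"
  proof -
    have "filterlim (\<lambda>p. log 2 (c * p + 1)) at_top at_top"
      using cpos by real_asymp
    thus ?thesis
      by (rule filterlim_cong[THEN iffD1, rotated 3]) (auto simp: Ree_def c_def field_simps)
  qed
  have Rtt_lim: "filterlim Rtt at_top at_top"
  proof -
    have h1: "filterlim (\<lambda>p. lambertW0 (z p) / ln 2 + Ree p) at_top at_top"
      by (rule filterlim_tendsto_add_at_top[OF tl Ree_lim])
    have h2: "eventually (\<lambda>p. lambertW0 (z p) / ln 2 + Ree p = Rtt p) at_top"
      using ev by eventually_elim (simp add: Rtt_def z_eq)
    show ?thesis using filterlim_cong[OF refl refl h2] h1 by (rule iffD1)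
  qed
  have U_lim: "(U \<longlongrightarrow> w5 / (real N * ln 2) * exp (- K5 * exp w5)) at_top"
  proof -
    have l1: "((\<lambda>p. A / p * (c * p + 1)) \<longlongrightarrow> K5) at_top"
      unfolding K5eq using Apos cpos by real_asymp
    have l2: "((\<lambda>p. A / p) \<longlongrightarrow> 0) at_top" by real_asymp
    have t1: "((\<lambda>p. (lambertW0 (z p) / ln 2) / real N *
              exp (- (A / p * (c * p + 1) * exp (lambertW0 (z p)) - A / p))) \<longlongrightarrow>
          (w5 / ln 2) / real N * exp (- (K5 * exp w5 - 0))) at_top"
      apply (intro tendsto_intros Wlim l1 l2) using hN by auto
    have e1: "eventually (\<lambda>p. (lambertW0 (z p) / ln 2) / real N *
              exp (- (A / p * (c * p + 1) * exp (lambertW0 (z p)) - A / p)) = U p) at_top"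
      using ev
    proof eventually_elim
      case (elim p)
      have "2 powr Rtt p = 2 powr Ree p * 2 powr (lambertW0 (z p) / ln 2)"
        unfolding Rtt_def z_eq[OF elim] by (simp add: powr_add)
      also have "2 powr (lambertW0 (z p) / ln 2) = exp (lambertW0 (z p))"
        by (simp add: powr_def)
      finally have "2 powr Rtt p = (c * p + 1) * exp (lambertW0 (z p))"
        using Ree_eq[OF elim] by simp
      moreover have "Rss p = lambertW0 (z p) / ln 2" unfolding Rss_def using z_eq[OF elim] by simp
      moreover have "K4 p = A / p" unfolding K4_def A_def by simp
      ultimately show ?case unfolding U_def
        by (simp add: algebra_simps)
    qed
    have "(U \<longlongrightarrow> (w5 / ln 2) / real N * exp (- (K5 * exp w5 - 0))) at_top"
      using tendsto_cong[OF e1] t1 by (rule iffD1)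
    thus ?thesis by (simp add: divide_divide_eq_left mult.commute)
  qed
  show ?thesis using Rtt_lim Rss_lim U_lim unfolding w5_def
    by (simp add: mult.commute mult.left_commute divide_simps)
qed

end
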